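(* Let $\mathbf{b}=(b_n)_{n\in\mathbb{N}_0}$ be a $D$-sequence with $\frac{b_{n+1}}{b_n}\to\infty$. Then $$(\mathbb{Z},\tau_{\mathbf{b}})^\wedge=\Big\langle\Big\{\tfrac{1}{b_n}+\mathbb{Z}: n\in\mathbb{N}\Big\}\Big\rangle=(\mathbb{Z},\lambda_{\mathbf{b}})^\wedge,$$ where a character $\chi$ of $\mathbb{Z}$ is identified with $\chi(1)\in\mathbb{T}$; that is, a homomorphism $\chi:\mathbb{Z}\to\mathbb{T}$ is $\tau_{\mathbf{b}}$-continuous if and only if it is $\lambda_{\mathbf{b}}$-continuous, if and only if $\chi(1)=\frac{a}{b_n}+\mathbb{Z}$ for some $a\in\mathbb{Z}$, $n\in\mathbb{N}$.
   Context: $\mathbb{T}=\mathbb{R}/\mathbb{Z}$; $\mathbb{T}_m=[-\frac{1}{4m},\frac{1}{4m}]+\mathbb{Z}$. For a topological abelian group $G$, $G^\wedge$ is the group of continuous homomorphisms $G\to\mathbb{T}$. A $D$-sequence is a sequence $\mathbf{b}=(b_n)_{n\in\mathbb{N}_0}$ of natural numbers with $b_0=1$, $b_n\mid b_{n+1}$, $b_n\neq b_{n+1}$. $\lambda_{\mathbf{b}}$ is the group topology on $\mathbb{Z}$ with neighborhood basis $\{b_n\mathbb{Z}\}_{n\in\mathbb{N}_0}$ at $0$. $\tau_{\mathbf{b}}$ is the group topology on $\mathbb{Z}$ with neighborhood basis at $0$ given by $V_{\mathbf{b},m}=\{k\in\mathbb{Z}: \frac{k}{b_n}+\mathbb{Z}\in\mathbb{T}_m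 \text{ for all } n\in\mathbb{N}\}$, $m\in\mathbb{N}$. *)

theory Defs
  imports "HOL-Analysis.Analysis"
begin

text \<open>The circle group T = R/Z, realised as the set of cosets x + Z.\<close>
definition coset :: "real \<Rightarrow> real set" where
  "coset x = {x + of_int k | k. True}"

definition Tcirc :: "real set set" where
  "Tcirc = range coset"

definition tadd :: "real set \<Rightarrow> real set \<Rightarrow> real set" where
  "tadd A B = {a + b | a b. a \<in> A \<and> b \<in> B}"

definition T_top :: "real set topology" where
  "T_top = topology (\<lambda>U. U \<subseteq> Tcirc \<and> open {x. coset x \<in> U})"

definition is_hom_ZT :: "(int \<Rightarrow> real set) \<Rightarrow> bool" where
  "is_hom_ZT chi \<longleftrightarrow> (\<forall>k. chi k \<in> Tcirc) \<and> (\<forall>k l. chi (k + l) = tadd (chi k) (chi l))"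

definition group_top_basis :: "int set set \<Rightarrow> int topology" where
  "group_top_basis B = topology (\<lambda>U. \<forall>x\<in>U. \<exists>V\<in>B. (\<lambda>v. x + v) ` V \<subseteq> U)"

definition D_sequence :: "(nat \<Rightarrow> nat) \<Rightarrow> bool" where
  "D_sequence b \<longleftrightarrow> b 0 = 1 \<and> (\<forall>n. 0 < b n) \<and>
     (\<forall>n. b n dvd b (Suc n)) \<and> (\<forall>n. b n \<noteq> b (Suc n))"

definition lambda_top :: "(nat \<Rightarrow> nat) \<Rightarrow> int topology" where
  "lambda_top b = group_top_basis (range (\<lambda>n. {int (b n) * k | k. True}))"

definition T_m :: "nat \<Rightarrow> real set set" where
  "T_m m = {coset x | x. \<bar>x\<bar> \<le> 1 / (4 * real m)}"

definition V_b :: "(nat \<Rightarrow> nat) \<Rightarrow> nat \<Rightarrow> int set" where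
  "V_b b m = {k. \<forall>n\<ge>1. coset (real_of_int k / real (b n)) \<in> T_m m}"

definition tau_top :: "(nat \<Rightarrow> nat) \<Rightarrow> int topology" where
  "tau_top b = group_top_basis {V_b b m | m. m \<ge> 1}"

end

theory Submission
  imports Defs
begin


lemma coset_eq_iff: "coset a = coset b \<longleftrightarrow> (\<exists>j::int. a = b + of_int j)"
proof
  assume "coset a = coset b"
  moreover have "a \<in> coset a" unfolding coset_def by (auto intro: exI[of _ 0])
  ultimately show "\<exists>j::int. a = b + of_int j" unfolding coset_def by auto
next
  assume "\<exists>j::int. a = b + of_int j"
  then obtain j where j: "a = b + of_int j" by blast
  show "coset a = coset b" unfolding coset_def
  proof (rule set_eqI, rule iffI)
    fix z assume "z \<in> {a + of_int k |k. True}"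
    then obtain k where "z = a + of_int k" by auto
    hence "z = b + of_int (j + k)" using j by simp
    thus "z \<in> {b + of_int k |k. True}" by blast
  next
    fix z assume "z \<in> {b + of_int k |k. True}"
    then obtain k where "z = b + of_int k" by auto
    hence "z = a + of_int (k - j)" using j by simp
    thus "z \<in> {a + of_int k |k. True}" by blast
  qed
qed

lemma coset_add_int: "coset (a + of_int j) = coset a"
  using coset_eq_iff by blast

lemma tadd_coset: "tadd (coset a) (coset b) = coset (a + b)"
  unfolding tadd_def coset_def
proof (rule set_eqI, rule iffI)
  fix z assume "z \<in> {x + y |x y. x \<in> {a + of_int k |k. True} \<and> y \<in> {b + of_int k |k. True}}"
  then obtain k l where "z = (a + of_int k) + (b + of_int l)" by blast
  hence "z = a + b + of_int (k + l)" by simp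
  thus "z \<in> {a + b + of_int k |k. True}" by blast
next
  fix z assume "z \<in> {a + b + of_int k |k. True}"
  then obtain k where "z = (a + of_int k) + (b + of_int 0)" by auto
  thus "z \<in> {x + y |x y. x \<in> {a + of_int k |k. True} \<and> y \<in> {b + of_int k |k. True}}" by blast
qed

lemma hom_coset:
  assumes h: "is_hom_ZT chi" and x: "chi 1 = coset x"
  shows "chi k = coset (of_int k * x)"
proof -
  have T: "\<And>k. chi k \<in> Tcirc" and A: "\<And>k l. chi (k + l) = tadd (chi k) (chi l)"
    using h unfolding is_hom_ZT_def by auto
  obtain c where c: "chi 0 = coset c" using T[of 0] unfolding Tcirc_def by auto
  have "coset c = coset (c + c)" using A[of 0 0] c tadd_coset by simp
  then obtain j where "c = c + c + of_int j" using coset_eq_iff by blast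
  hence "c = 0 + of_int (-j)" by simp
  hence c0: "chi 0 = coset 0" using c coset_add_int by metis
  show ?thesis
  proof (induction k rule: int_induct[where k=0])
    case base then show ?case using c0 by simp
  next
    case (step1 i)
    have "chi (i + 1) = tadd (chi i) (chi 1)" by (rule A)
    also have "\<dots> = coset (of_int i * x + x)" using step1 x tadd_coset by simp
    finally show ?case by (simp add: algebra_simps)
  next
    case (step2 i)
    obtain d where d: "chi (i - 1) = coset d" using T[of "i-1"] unfolding Tcirc_def by auto
    have "chi i = tadd (chi (i - 1)) (chi 1)" using A[of "i-1" 1] by simp
    hence "coset (of_int i * x) = coset (d + x)" using step2 d x tadd_coset by simp
    then obtain j where "of_int i * x = d + x + of_int j" using coset_eq_iff by blast
    hence "d = of_int (i - 1) * x + of_int (-j)" by (simp add: algebra_simps)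
    thus ?case using d coset_add_int[of "of_int (i - 1) * x" "-j"] by simp
  qed
qed



lemma istop_gtb:
  assumes "\<And>V1 V2. V1 \<in> B \<Longrightarrow> V2 \<in> B \<Longrightarrow> \<exists>V\<in>B. V \<subseteq> V1 \<inter> V2"
  shows "istopology (\<lambda>U. \<forall>x\<in>U. \<exists>V\<in>B. (\<lambda>v. x + v) ` V \<subseteq> (U::int set))"
  unfolding istopology_def
proof (intro conjI allI impI)
  fix S T :: "int set"
  assume S: "\<forall>x\<in>S. \<exists>V\<in>B. (+) x ` V \<subseteq> S" and T: "\<forall>x\<in>T. \<exists>V\<in>B. (+) x ` V \<subseteq> T"
  show "\<forall>x\<in>S \<inter> T. \<exists>V\<in>B. (+) x ` V \<subseteq> S \<inter> T"
  proof
    fix x assume "x \<in> S \<inter> T"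
    then obtain V1 V2 where "V1 \<in> B" "V2 \<in> B" "(+) x ` V1 \<subseteq> S" "(+) x ` V2 \<subseteq> T"
      using S T by blast
    moreover obtain V where "V \<in> B" "V \<subseteq> V1 \<inter> V2" using assms calculation(1,2) by meson
    ultimately have "(+) x ` V \<subseteq> S \<inter> T" by (meson image_mono inf.bounded_iff subset_trans)
    thus "\<exists>V\<in>B. (+) x ` V \<subseteq> S \<inter> T" using \<open>V \<in> B\<close> by (intro bexI)
  qed
next
  fix K :: "int set set"
  assume "\<forall>K\<in>K. \<forall>x\<in>K. \<exists>V\<in>B. (+) x ` V \<subseteq> K"
  show "\<forall>x\<in>\<Union>K. \<exists>V\<in>B. (+) x ` V \<subseteq> \<Union>K"
  proof
    fix x assume "x \<in> \<Union>K"
    then obtain K0 where K0: "K0 \<in> K" "x \<in> K0" by (rule UnionE)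
    then obtain V where "V \<in> B" "(+) x ` V \<subseteq> K0" using \<open>\<forall>K\<in>K. _\<close> by meson
    moreover have "K0 \<subseteq> \<Union>K" using K0(1) by (rule Union_upper)
    ultimately show "\<exists>V\<in>B. (+) x ` V \<subseteq> \<Union>K" by (meson subset_trans)
  qed
qed

lemma openin_gtb:
  assumes "\<And>V1 V2. V1 \<in> B \<Longrightarrow> V2 \<in> B \<Longrightarrow> \<exists>V\<in>B. V \<subseteq> V1 \<inter> V2"
  shows "openin (group_top_basis B) U \<longleftrightarrow> (\<forall>x\<in>U. \<exists>V\<in>B. (\<lambda>v. x + v) ` V \<subseteq> U)"
  unfolding group_top_basis_def using istop_gtb[OF assms] by simp

lemma topspace_gtb:
  assumes "\<And>V1 V2. V1 \<in> B \<Longrightarrow> V2 \<in> B \<Longrightarrow> \<exists>V\<in>B. V \<subseteq> V1 \<inter> V2" and "B \<noteq> {}"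
  shows "topspace (group_top_basis B) = UNIV"
proof -
  have "openin (group_top_basis B) UNIV" using openin_gtb[OF assms(1)] assms(2) by blast
  hence "UNIV \<subseteq> topspace (group_top_basis B)" by (rule openin_subset)
  thus ?thesis by blast
qed

lemma istop_T: "istopology (\<lambda>U. U \<subseteq> Tcirc \<and> open {x. coset x \<in> U})"
proof -
  have 1: "S \<inter> T \<subseteq> Tcirc \<and> open {x. coset x \<in> S \<inter> T}"
    if "S \<subseteq> Tcirc \<and> open {x. coset x \<in> S}" "T \<subseteq> Tcirc \<and> open {x. coset x \<in> T}" for S T
  proof -
    have "{x. coset x \<in> S \<inter> T} = {x. coset x \<in> S} \<inter> {x. coset x \<in> T}" by auto
    thus ?thesis using that by auto
  qed
  have 2: "\<Union>K \<subseteq> Tcirc \<and> open {x. coset x \<in> \<Union>K}"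
    if a: "\<forall>K\<in>K. K \<subseteq> Tcirc \<and> open {x. coset x \<in> K}" for K :: "real set set set"
  proof -
    have "{x. coset x \<in> \<Union>K} = (\<Union>k\<in>K. {x. coset x \<in> k})" by auto
    thus ?thesis using a by auto
  qed
  show ?thesis unfolding istopology_def using 1 2 by meson
qed

lemma openin_T: "openin T_top U \<longleftrightarrow> U \<subseteq> Tcirc \<and> open {x. coset x \<in> U}"
  unfolding T_top_def using istop_T by simp

lemma topspace_T: "topspace T_top = Tcirc"
proof -
  have "openin T_top Tcirc" unfolding openin_T Tcirc_def by simp
  hence "Tcirc \<subseteq> topspace T_top" by (rule openin_subset)
  moreover have "topspace T_top \<subseteq> Tcirc" using openin_T[of "topspace T_top"] by simp
  ultimately show ?thesis by blast
qed

lemma cont_iff: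
  assumes "\<And>V1 V2. V1 \<in> B \<Longrightarrow> V2 \<in> B \<Longrightarrow> \<exists>V\<in>B. V \<subseteq> V1 \<inter> V2" and "B \<noteq> {}"
    and "\<And>k. chi k \<in> Tcirc"
  shows "continuous_map (group_top_basis B) T_top chi \<longleftrightarrow>
    (\<forall>U. openin T_top U \<longrightarrow> (\<forall>k. chi k \<in> U \<longrightarrow> (\<exists>V\<in>B. \<forall>v\<in>V. chi (k + v) \<in> U)))"
proof -
  have e1: "topspace (group_top_basis B) = UNIV" by (rule topspace_gtb[OF assms(1,2)])
  have e2: "\<And>U. openin (group_top_basis B) U \<longleftrightarrow> (\<forall>x\<in>U. \<exists>V\<in>B. (\<lambda>v. x + v) ` V \<subseteq> U)"
    by (rule openin_gtb[OF assms(1)])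
  show ?thesis unfolding continuous_map_def e1 e2 topspace_T
    using assms(3) by (simp add: image_subset_iff Pi_iff)
qed

lemma D_pos: "D_sequence b \<Longrightarrow> 0 < b n" by (simp add: D_sequence_def)

lemma D_two: assumes "D_sequence b" shows "2 * b n \<le> b (Suc n)"
proof -
  obtain q where q: "b (Suc n) = b n * q" using assms unfolding D_sequence_def by (meson dvdE)
  have "q \<noteq> 1"
  proof
    assume "q = 1" hence "b (Suc n) = b n" using q by simp
    moreover have "b n \<noteq> b (Suc n)" using assms unfolding D_sequence_def by blast
    ultimately show False by simp
  qed
  moreover have "q \<noteq> 0" using q D_pos[OF assms, of "Suc n"] by auto
  ultimately have "q \<ge> 2" by simp
  thus ?thesis using q by simp
qed

lemma D_dvd: assumes "D_sequence b" "n \<le> p" shows "b n dvd b p"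
  using assms(2)
proof (induction p rule: dec_induct)
  case base then show ?case by simp
next
  case (step p) then show ?case using assms(1) unfolding D_sequence_def using dvd_trans by blast
qed

lemma D_mono: assumes "D_sequence b" "n \<le> p" shows "b n \<le> b p"
  using D_dvd[OF assms] D_pos[OF assms(1)] by (simp add: dvd_imp_le)

lemma D_sum: assumes "D_sequence b" shows "(\<Sum>i<p. real (b (Suc i))) \<le> 2 * real (b p)"
proof (induction p)
  case 0 then show ?case by simp
next
  case (Suc p)
  have "real (2 * b p) \<le> real (b (Suc p))" using D_two[OF assms, of p] by (simp only: of_nat_le_iff)
  then show ?case using Suc by simp
qed



lemma L2:
  fixes v :: "nat \<Rightarrow> real"
  assumes "v 0 = 0" "\<And>j. \<bar>v (Suc j) - v j\<bar> \<le> 1/2" "\<And>j. \<exists>p::int. \<bar>v j - of_int p\<bar> < 1/4"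
  shows "\<bar>v j\<bar> < 1/4"
proof (induction j)
  case 0 then show ?case using assms(1) by simp
next
  case (Suc j)
  obtain p::int where p: "\<bar>v (Suc j) - of_int p\<bar> < 1/4" using assms(3) by blast
  have "\<bar>v (Suc j)\<bar> < 3/4" using Suc assms(2)[of j] by linarith
  hence "\<bar>of_int p\<bar> < (1::real)" using p by linarith
  hence "p = 0" by linarith
  then show ?case using p by simp
qed

lemma Vmem:
  assumes D: "D_sequence b" and m: "m \<ge> 1"
    and c: "\<And>i. 8 * real m * \<bar>real_of_int (c i)\<bar> * real (b i) \<le> real (b (Suc i))"
  shows "(\<Sum>i<L. c i * int (b i)) \<in> V_b b m"
  unfolding V_b_def T_m_def
proof (rule CollectI, intro allI impI)
  fix n :: nat assume "n \<ge> 1"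
  define f where "f i = real_of_int (c i) * real (b i)" for i
  define y where "y = (\<Sum>i<L. if i < n then f i else 0) / real (b n)"
  define j where "j = (\<Sum>i<L. if i < n then 0 else c i * int (b i div b n))"
  have bn: "real (b n) > 0" using D_pos[OF D] by simp
  have "real_of_int (\<Sum>i<L. c i * int (b i)) = (\<Sum>i<L. f i)" by (simp add: f_def)
  also have "\<dots> = (\<Sum>i<L. (if i < n then f i else 0) + (if i < n then 0 else f i))"
    by (rule sum.cong) auto
  also have "\<dots> = (\<Sum>i<L. if i < n then f i else 0) + (\<Sum>i<L. if i < n then 0 else f i)"
    by (rule sum.distrib)
  finally have k: "real_of_int (\<Sum>i<L. c i * int (b i)) = (\<Sum>i<L. if i < n then f i else 0) + (\<Sum>i<L. if i < n then 0 else f i)" .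
  have "(\<Sum>i<L. if i < n then 0 else f i) / real (b n) = (\<Sum>i<L. (if i < n then 0 else f i) / real (b n))"
    by (rule sum_divide_distrib)
  also have "\<dots> = (\<Sum>i<L. real_of_int (if i < n then 0 else c i * int (b i div b n)))"
  proof (rule sum.cong)
    fix i assume "i \<in> {..<L}"
    show "(if i < n then 0 else f i) / real (b n) = real_of_int (if i < n then 0 else c i * int (b i div b n))"
    proof (cases "i < n")
      case False
      hence "b n dvd b i" using D_dvd[OF D] by simp
      hence "real (b i div b n) = real (b i) / real (b n)" by (rule real_of_nat_div)
      thus ?thesis using False by (simp add: f_def)
    qed simp
  qed simp
  also have "\<dots> = real_of_int j" unfolding j_def by simp
  finally have "(\<Sum>i<L. if i < n then 0 else f i) / real (b n) = real_of_int j" .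
  hence eq: "real_of_int (\<Sum>i<L. c i * int (b i)) / real (b n) = y + real_of_int j"
    using k unfolding y_def by (simp add: add_divide_distrib)
  have "\<bar>\<Sum>i<L. if i < n then f i else 0\<bar> \<le> (\<Sum>i<L. \<bar>if i < n then f i else 0\<bar>)"
    by (rule sum_abs)
  also have "\<dots> \<le> (\<Sum>i<L. if i < n then real (b (Suc i)) / (8 * real m) else 0)"
  proof (rule sum_mono)
    fix i
    have "8 * real m * \<bar>f i\<bar> \<le> real (b (Suc i))" using c[of i] by (simp add: f_def abs_mult)
    hence "\<bar>f i\<bar> \<le> real (b (Suc i)) / (8 * real m)" using m by (simp add: field_simps)
    thus "\<bar>if i < n then f i else 0\<bar> \<le> (if i < n then real (b (Suc i)) / (8 * real m) else 0)" by simp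
  qed
  also have "\<dots> = (\<Sum>i\<in>{i\<in>{..<L}. i < n}. real (b (Suc i)) / (8 * real m))"
    by (rule sum.inter_filter[symmetric]) simp
  also have "{i\<in>{..<L}. i < n} = {..<min L n}" by auto
  also have "(\<Sum>i<min L n. real (b (Suc i)) / (8 * real m)) = (\<Sum>i<min L n. real (b (Suc i))) / (8 * real m)"
    by (rule sum_divide_distrib[symmetric])
  also have "\<dots> \<le> 2 * real (b (min L n)) / (8 * real m)"
    by (rule divide_right_mono[OF D_sum[OF D]]) simp
  also have "\<dots> \<le> 2 * real (b n) / (8 * real m)"
    using D_mono[OF D, of "min L n" n] m by (simp add: divide_right_mono)
  finally have Sb: "\<bar>\<Sum>i<L. if i < n then f i else 0\<bar> \<le> 2 * real (b n) / (8 * real m)" .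
  have "\<bar>y\<bar> = \<bar>\<Sum>i<L. if i < n then f i else 0\<bar> / real (b n)" unfolding y_def using bn by simp
  also have "\<dots> \<le> 2 * real (b n) / (8 * real m) / real (b n)"
    by (rule divide_right_mono[OF Sb]) simp
  also have "\<dots> = 1 / (4 * real m)" using bn by (simp add: field_simps)
  finally have yb: "\<bar>y\<bar> \<le> 1 / (4 * real m)" .
  have "coset (real_of_int (\<Sum>i<L. c i * int (b i)) / real (b n)) = coset y"
    unfolding eq by (rule coset_add_int)
  thus "coset (real_of_int (\<Sum>i<L. c i * int (b i)) / real (b n)) \<in> {coset x |x. \<bar>x\<bar> \<le> 1 / (4 * real m)}"
    using yb by blast
qed

definition U0 :: "real set set" where "U0 = {coset y | y. \<bar>y\<bar> < 1/4}"

lemma U0_mem: "coset z \<in> U0 \<longleftrightarrow> (\<exists>p::int. \<bar>z - of_int p\<bar> < 1/4)"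
proof
  assume "coset z \<in> U0"
  then obtain y where y: "coset z = coset y" "\<bar>y\<bar> < 1/4" unfolding U0_def by auto
  then obtain j where "z = y + of_int j" using coset_eq_iff by blast
  thus "\<exists>p::int. \<bar>z - of_int p\<bar> < 1/4" using y(2) by (intro exI[of _ j]) simp
next
  assume "\<exists>p::int. \<bar>z - of_int p\<bar> < 1/4"
  then obtain p::int where p: "\<bar>z - of_int p\<bar> < 1/4" by blast
  have "coset z = coset ((z - of_int p) + of_int p)" by simp
  also have "\<dots> = coset (z - of_int p)" by (rule coset_add_int)
  finally show "coset z \<in> U0" unfolding U0_def using p by blast
qed

lemma U0_open: "openin T_top U0"
  unfolding openin_T
proof
  show "U0 \<subseteq> Tcirc" unfolding U0_def Tcirc_def by auto
  have "{x. coset x \<in> U0} = (\<Union>p. ball (real_of_int p) (1/4))"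
    unfolding U0_mem by (auto simp: dist_real_def abs_minus_commute)
  moreover have "open (\<Union>p. ball (real_of_int p) (1/4))" by (intro open_UN) auto
  ultimately show "open {x. coset x \<in> U0}" by simp
qed



lemma hardD:
  assumes D: "D_sequence b"
    and lim: "filterlim (\<lambda>n. real (b (Suc n)) / real (b n)) at_top sequentially"
    and m: "m \<ge> 1"
    and G: "\<And>k. k \<in> V_b b m \<Longrightarrow> \<exists>p::int. \<bar>real_of_int k * x - of_int p\<bar> < 1/4"
  shows "\<exists>a::int. \<exists>n. x = of_int a / real (b n)"
proof (rule ccontr)
  assume nx: "\<not> ?thesis"
  define R where "R i = round (real (b i) * x)" for i
  define d where "d i = real (b i) * x - of_int (R i)" for i
  have bpos: "real (b i) > 0" for i using D_pos[OF D] by simp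
  have dh: "\<bar>d i\<bar> \<le> 1/2" for i
    using of_int_round_abs_le[of "real (b i) * x"] unfolding d_def R_def by linarith
  have dnz: "d i \<noteq> 0" for i
  proof
    assume "d i = 0"
    hence "x = of_int (R i) / real (b i)" using bpos[of i] unfolding d_def by (simp add: field_simps)
    thus False using nx by blast
  qed
  have bx: "real (b i) * x = of_int (R i) + d i" for i unfolding d_def by simp
  define q where "q i = b (Suc i) div b i" for i
  have bq: "b (Suc i) = q i * b i" for i
    using D unfolding D_sequence_def q_def by simp
  have rq: "real (b (Suc i)) / real (b i) = real (q i)" for i
    using bq[of i] bpos[of i] by simp
  have q2: "q i \<ge> 2" for i
    using D_two[OF D, of i] bq[of i] D_pos[OF D, of i] by simp
  define M where "M i = q i div (8 * m)" for i
  have Mle_nat: "8 * m * M i \<le> q i" for i unfolding M_def by simp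
  have Mle: "8 * real m * \<bar>real_of_int (int (M i))\<bar> * real (b i) \<le> real (b (Suc i))" for i
  proof -
    have "real (8 * m * M i) \<le> real (q i)" using Mle_nat[of i] by (simp only: of_nat_le_iff)
    hence "8 * real m * real (M i) * real (b i) \<le> real (q i) * real (b i)"
      using bpos[of i] by (simp add: mult_right_mono)
    thus ?thesis using bq[of i] by simp
  qed
  have Gs: "\<exists>p::int. \<bar>real_of_int c * d N - of_int p\<bar> < 1/4"
    if vc: "c * int (b N) \<in> V_b b m" for c N
  proof -
    obtain p::int where p: "\<bar>real_of_int (c * int (b N)) * x - of_int p\<bar> < 1/4" using G[OF vc] by blast
    have "real_of_int (c * int (b N)) * x = of_int c * (real (b N) * x)" by simp
    also have "\<dots> = of_int (c * R N) + of_int c * d N" unfolding bx by (simp add: algebra_simps)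
    finally have e: "real_of_int (c * int (b N)) * x = of_int (c * R N) + of_int c * d N" .
    have "real_of_int c * d N - of_int (p - c * R N) = real_of_int (c * int (b N)) * x - of_int p"
      unfolding e by simp
    hence "\<bar>real_of_int c * d N - of_int (p - c * R N)\<bar> < 1/4" using p by (simp only:)
    thus ?thesis by blast
  qed
  have single: "real (M N) * \<bar>d N\<bar> < 1/4" for N
  proof -
    define v where "v c = real (min c (M N)) * d N" for c
    have vb: "\<bar>v c\<bar> < 1/4" for c
    proof (rule L2)
      show "v 0 = 0" unfolding v_def by simp
      fix j
      show "\<bar>v (Suc j) - v j\<bar> \<le> 1/2"
      proof (cases "j < M N")
        case True
        hence "v (Suc j) - v j = d N" unfolding v_def by (simp add: algebra_simps)
        thus ?thesis using dh[of N] by simp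
      next
        case False
        thus ?thesis unfolding v_def by simp
      qed
      define c' where "c' = int (min j (M N))"
      define cf where "cf i = (if i = N then c' else 0)" for i
      have "(\<Sum>i<Suc N. cf i * int (b i)) \<in> V_b b m"
      proof (rule Vmem[OF D m])
        fix i
        show "8 * real m * \<bar>real_of_int (cf i)\<bar> * real (b i) \<le> real (b (Suc i))"
        proof (cases "i = N")
          case True
          have "real (min j (M N)) \<le> real (M N)" by simp
          hence "8 * real m * real (min j (M N)) * real (b N) \<le> 8 * real m * real (M N) * real (b N)"
            using bpos[of N] by (intro mult_right_mono mult_left_mono) auto
          thus ?thesis using True Mle[of N] unfolding cf_def c'_def by simp
        qed (simp add: cf_def)
      qed
      moreover have "(\<Sum>i<Suc N. cf i * int (b i)) = c' * int (b N)" unfolding cf_def by simp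
      ultimately have "\<exists>p::int. \<bar>real_of_int c' * d N - of_int p\<bar> < 1/4" using Gs by simp
      thus "\<exists>p::int. \<bar>v j - of_int p\<bar> < 1/4" unfolding v_def c'_def by simp
    qed
    show ?thesis using vb[of "M N"] unfolding v_def by (simp add: abs_mult)
  qed

  have good: "\<exists>i\<ge>I. real (q i) * \<bar>d i\<bar> \<ge> 1/2" for I
  proof (rule ccontr)
    assume "\<not> ?thesis"
    hence small: "\<And>i. i \<ge> I \<Longrightarrow> real (q i) * \<bar>d i\<bar> < 1/2" by force
    have rec: "d (Suc i) = real (q i) * d i" if "i \<ge> I" for i
    proof -
      have "real (b (Suc i)) * x = real (q i) * (real (b i) * x)" using bq[of i] by simp
      hence "of_int (R (Suc i)) + d (Suc i) = real (q i) * (of_int (R i) + d i)" unfolding bx .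
      hence e: "d (Suc i) - real (q i) * d i = of_int (int (q i) * R i - R (Suc i))"
        by (simp add: algebra_simps)
      have "\<bar>real (q i) * d i\<bar> < 1/2" using small[OF that] by (simp add: abs_mult)
      hence "\<bar>d (Suc i) - real (q i) * d i\<bar> < 1" using dh[of "Suc i"] by linarith
      hence "\<bar>real_of_int (int (q i) * R i - R (Suc i))\<bar> < 1" unfolding e .
      hence "int (q i) * R i - R (Suc i) = 0" by linarith
      thus ?thesis using e by simp
    qed
    have grow: "\<bar>d (I + j)\<bar> \<ge> 2 ^ j * \<bar>d I\<bar>" for j
    proof (induction j)
      case 0 then show ?case by simp
    next
      case (Suc j)
      have "\<bar>d (I + Suc j)\<bar> = real (q (I + j)) * \<bar>d (I + j)\<bar>"
        using rec[of "I + j"] by (simp add: abs_mult)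
      also have "\<dots> \<ge> 2 * \<bar>d (I + j)\<bar>"
        using q2[of "I + j"] by (intro mult_right_mono) auto
      finally show ?case using Suc by simp
    qed
    have dI: "\<bar>d I\<bar> > 0" using dnz[of I] by simp
    obtain j :: nat where j: "1 / (2 * \<bar>d I\<bar>) < real j" using reals_Archimedean2 by blast
    have "real j < 2 ^ j" by (rule of_nat_less_two_power)
    hence "1 / (2 * \<bar>d I\<bar>) < 2 ^ j" using j by linarith
    hence "1 < 2 ^ j * (2 * \<bar>d I\<bar>)" using dI by (simp add: field_simps)
    hence "1/2 < 2 ^ j * \<bar>d I\<bar>" by simp
    thus False using grow[of j] dh[of "I + j"] by linarith
  qed
  have "eventually (\<lambda>n. 16 * real m \<le> real (b (Suc n)) / real (b n)) sequentially"
    using lim unfolding filterlim_at_top by blast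
  then obtain N0 where N0: "\<And>n. n \<ge> N0 \<Longrightarrow> 16 * real m \<le> real (q n)"
    unfolding eventually_sequentially rq by blast
  define t where "t i = (if N0 \<le> i then real (M i) * \<bar>d i\<bar> else 0)" for i
  define sg where "sg i = (if d i \<ge> 0 then 1 else -1 :: int)" for i
  define c where "c i = (if N0 \<le> i then sg i * int (M i) else 0)" for i
  have ct: "real_of_int (c i) * d i = t i" for i
    unfolding c_def t_def sg_def by (auto simp: abs_if)
  have cabs: "\<bar>real_of_int (c i)\<bar> \<le> real (M i)" for i
    unfolding c_def sg_def by (auto simp: abs_mult)
  have tnn: "t i \<ge> 0" for i unfolding t_def by simp
  define w where "w j = (\<Sum>i<j. t i)" for j
  have wb: "\<bar>w j\<bar> < 1/4" for j
  proof (rule L2)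
    show "w 0 = 0" unfolding w_def by simp
    fix j
    have "\<bar>w (Suc j) - w j\<bar> = t j" unfolding w_def using tnn[of j] by simp
    also have "\<dots> \<le> real (M j) * \<bar>d j\<bar>" unfolding t_def by simp
    also have "\<dots> \<le> 1/2" using single[of j] by simp
    finally show "\<bar>w (Suc j) - w j\<bar> \<le> 1/2" .
    have "(\<Sum>i<j. c i * int (b i)) \<in> V_b b m"
    proof (rule Vmem[OF D m])
      fix i
      have "8 * real m * \<bar>real_of_int (c i)\<bar> * real (b i) \<le> 8 * real m * \<bar>real_of_int (int (M i))\<bar> * real (b i)"
        using cabs[of i] bpos[of i] by (intro mult_right_mono mult_left_mono) auto
      thus "8 * real m * \<bar>real_of_int (c i)\<bar> * real (b i) \<le> real (b (Suc i))" using Mle[of i] by linarith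
    qed
    then obtain p :: int where p: "\<bar>real_of_int (\<Sum>i<j. c i * int (b i)) * x - of_int p\<bar> < 1/4"
      using G by blast
    have "real_of_int (\<Sum>i<j. c i * int (b i)) * x = (\<Sum>i<j. real_of_int (c i) * (real (b i) * x))"
      by (simp add: sum_distrib_right mult.assoc)
    also have "\<dots> = (\<Sum>i<j. real_of_int (c i * R i) + t i)"
    proof (rule sum.cong[OF refl])
      fix i
      have "real_of_int (c i) * (real (b i) * x) = real_of_int (c i) * of_int (R i) + real_of_int (c i) * d i"
        unfolding bx by (simp add: distrib_left)
      thus "real_of_int (c i) * (real (b i) * x) = real_of_int (c i * R i) + t i" using ct[of i] by simp
    qed
    also have "\<dots> = of_int (\<Sum>i<j. c i * R i) + w j" unfolding w_def by (simp add: sum.distrib)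
    finally have e: "real_of_int (\<Sum>i<j. c i * int (b i)) * x = of_int (\<Sum>i<j. c i * R i) + w j" .
    have "w j - of_int (p - (\<Sum>i<j. c i * R i)) = real_of_int (\<Sum>i<j. c i * int (b i)) * x - of_int p"
      unfolding e by simp
    hence "\<bar>w j - of_int (p - (\<Sum>i<j. c i * R i))\<bar> < 1/4" using p by (simp only:)
    thus "\<exists>p::int. \<bar>w j - of_int p\<bar> < 1/4" by blast
  qed
  have wmono: "w j \<le> w (j + e)" for j e
  proof (induction e)
    case 0 then show ?case by simp
  next
    case (Suc e) then show ?case using tnn[of "j + e"] unfolding w_def by simp
  qed
  have tgood: "t i \<ge> 1 / (32 * real m)" if "i \<ge> N0" "real (q i) * \<bar>d i\<bar> \<ge> 1/2" for i
  proof -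
    have qb: "16 * real m \<le> real (q i)" using N0 that(1) by blast
    have qe: "q i = 8 * m * M i + q i mod (8 * m)" unfolding M_def by simp
    have "q i mod (8 * m) < 8 * m" using m by simp
    hence "q i < 8 * m * M i + 8 * m" using qe by linarith
    hence "real (q i) < real (8 * m * M i + 8 * m)" by (simp only: of_nat_less_iff)
    hence "real (q i) < 8 * real m * (real (M i) + 1)" by (simp add: algebra_simps)
    hence Mb: "real (q i) / (16 * real m) \<le> real (M i)" using qb m by (simp add: field_simps)
    have "1 / (32 * real m) = (1/2) / (16 * real m)" by simp
    also have "\<dots> \<le> (real (q i) * \<bar>d i\<bar>) / (16 * real m)" using that(2) m by (intro divide_right_mono) auto
    also have "\<dots> = (real (q i) / (16 * real m)) * \<bar>d i\<bar>" by simp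
    also have "\<dots> \<le> real (M i) * \<bar>d i\<bar>" using Mb by (intro mult_right_mono) auto
    finally show ?thesis unfolding t_def using that(1) by simp
  qed
  have "\<exists>j. w j \<ge> real n / (32 * real m)" for n
  proof (induction n)
    case 0 then show ?case using wmono[of 0] unfolding w_def by (auto intro: exI[of _ 0])
  next
    case (Suc n)
    then obtain j where j: "w j \<ge> real n / (32 * real m)" by blast
    obtain i where i: "i \<ge> max j N0" "real (q i) * \<bar>d i\<bar> \<ge> 1/2" using good by blast
    have "w j \<le> w i" using wmono[of j "i - j"] i(1) by simp
    moreover have "w (Suc i) = w i + t i" unfolding w_def by simp
    moreover have "t i \<ge> 1 / (32 * real m)" using tgood i by simp
    ultimately have "w (Suc i) \<ge> real n / (32 * real m) + 1 / (32 * real m)" using j by linarith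
    hence "w (Suc i) \<ge> real (Suc n) / (32 * real m)" by (simp add: add_divide_distrib)
    thus ?case by blast
  qed
  then obtain j where "w j \<ge> real (8 * m) / (32 * real m)" by blast
  moreover have "real (8 * m) / (32 * real m) = 1/4" using m by simp
  ultimately show False using wb[of j] by simp
qed



lemma lamA:
  assumes D: "D_sequence b" and G: "\<And>t::int. \<exists>p::int. \<bar>real_of_int t * real (b n) * x - of_int p\<bar> < 1/4"
  shows "\<exists>a::int. x = of_int a / real (b n)"
proof -
  define R where "R = round (real (b n) * x)"
  define d where "d = real (b n) * x - of_int R"
  have bpos: "real (b n) > 0" using D_pos[OF D] by simp
  have dh: "\<bar>d\<bar> \<le> 1/2" using of_int_round_abs_le[of "real (b n) * x"] unfolding d_def R_def by linarith
  define v where "v t = real t * d" for t :: nat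
  have vb: "\<bar>v t\<bar> < 1/4" for t
  proof (rule L2)
    show "v 0 = 0" unfolding v_def by simp
    fix j
    show "\<bar>v (Suc j) - v j\<bar> \<le> 1/2" unfolding v_def using dh by (simp add: algebra_simps)
    obtain p :: int where p: "\<bar>real_of_int (int j) * real (b n) * x - of_int p\<bar> < 1/4" using G by blast
    have e: "real_of_int (int j) * real (b n) * x = of_int (int j * R) + v j"
      unfolding v_def d_def by (simp add: algebra_simps)
    have "v j - of_int (p - int j * R) = real_of_int (int j) * real (b n) * x - of_int p"
      unfolding e by simp
    hence "\<bar>v j - of_int (p - int j * R)\<bar> < 1/4" using p by (simp only:)
    thus "\<exists>p::int. \<bar>v j - of_int p\<bar> < 1/4" by blast
  qed
  have "d = 0"
  proof (rule ccontr)
    assume "d \<noteq> 0"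
    hence dp: "\<bar>d\<bar> > 0" by simp
    obtain t :: nat where t: "1 / \<bar>d\<bar> < real t" using reals_Archimedean2 by blast
    hence "1 < real t * \<bar>d\<bar>" using dp by (simp add: field_simps)
    thus False using vb[of t] unfolding v_def by (simp add: abs_mult)
  qed
  hence "x = of_int R / real (b n)" using bpos unfolding d_def by (simp add: field_simps)
  thus ?thesis by blast
qed

lemma normP:
  assumes D: "D_sequence b" and x: "x = of_int a / real (b n)"
  shows "\<exists>a'::int. \<exists>n'::nat. n' \<ge> 1 \<and> coset x = coset (of_int a' / real (b n'))"
proof (cases "n \<ge> 1")
  case True then show ?thesis using x by blast
next
  case False
  hence "n = 0" by simp
  hence "x = of_int a" using x D unfolding D_sequence_def by simp
  moreover have "real (b 1) > 0" using D_pos[OF D] by simp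
  ultimately have "x = of_int (a * int (b 1)) / real (b 1)" by simp
  thus ?thesis by (intro exI[of _ "a * int (b 1)"] exI[of _ 1]) simp
qed



theorem theorem4p4:
  fixes b :: "nat \<Rightarrow> nat" and chi :: "int \<Rightarrow> real set"
  assumes "D_sequence b"
    and "filterlim (\<lambda>n. real (b (Suc n)) / real (b n)) at_top sequentially"
    and "is_hom_ZT chi"
  shows "(continuous_map (tau_top b) T_top chi \<longleftrightarrow> continuous_map (lambda_top b) T_top chi)
       \<and> (continuous_map (lambda_top b) T_top chi \<longleftrightarrow>
            (\<exists>a::int. \<exists>n::nat. n \<ge> 1 \<and> chi 1 = coset (real_of_int a / real (b n))))"
proof -
  note D = assms(1) and lim = assms(2) and h = assms(3)
  have Tc: "\<And>k. chi k \<in> Tcirc" using h unfolding is_hom_ZT_def by blast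
  obtain x where x: "chi 1 = coset x" using Tc[of 1] unfolding Tcirc_def by auto
  have chiE: "\<And>k. chi k = coset (of_int k * x)" using hom_coset[OF h x] .
  define Bl where "Bl = range (\<lambda>n. {int (b n) * k | k. True})"
  define Bt where "Bt = {V_b b m | m. m \<ge> 1}"
  have dirl: "\<exists>V\<in>Bl. V \<subseteq> V1 \<inter> V2" if VV: "V1 \<in> Bl" "V2 \<in> Bl" for V1 V2
  proof -
    obtain n1 where n1: "V1 = {int (b n1) * k | k. True}"
      using VV(1) unfolding Bl_def by (rule rangeE)
    obtain n2 where n2: "V2 = {int (b n2) * k | k. True}"
      using VV(2) unfolding Bl_def by (rule rangeE)
    note n = n1 n2
    have sub: "{int (b (max n1 n2)) * k | k. True} \<subseteq> {int (b n') * k | k. True}" if nn: "n' \<le> max n1 n2" for n'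
    proof
      fix z assume "z \<in> {int (b (max n1 n2)) * k | k. True}"
      then obtain k where k: "z = int (b (max n1 n2)) * k" by blast
      obtain t where "b (max n1 n2) = b n' * t" using D_dvd[OF D nn] by (meson dvdE)
      hence "z = int (b n') * (int t * k)" using k by simp
      thus "z \<in> {int (b n') * k | k. True}" by blast
    qed
    show ?thesis using sub[of n1] sub[of n2] n unfolding Bl_def by auto
  qed
  have nel: "Bl \<noteq> {}" unfolding Bl_def by simp
  have dirt: "\<exists>V\<in>Bt. V \<subseteq> V1 \<inter> V2" if VV: "V1 \<in> Bt" "V2 \<in> Bt" for V1 V2
  proof -
    obtain m1 m2 where mm: "V1 = V_b b m1" "V2 = V_b b m2" "m1 \<ge> 1" "m2 \<ge> 1"
      using VV unfolding Bt_def by auto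
    have sub: "V_b b (max m1 m2) \<subseteq> V_b b m'" if mm': "m' \<ge> 1" "m' \<le> max m1 m2" for m'
    proof -
      have "T_m (max m1 m2) \<subseteq> T_m m'"
      proof
        fix z assume "z \<in> T_m (max m1 m2)"
        then obtain y where y: "z = coset y" "\<bar>y\<bar> \<le> 1 / (4 * real (max m1 m2))" unfolding T_m_def by auto
        have "1 / (4 * real (max m1 m2)) \<le> 1 / (4 * real m')"
          using mm' by (intro divide_left_mono) auto
        thus "z \<in> T_m m'" using y unfolding T_m_def by auto
      qed
      thus ?thesis unfolding V_b_def by auto
    qed
    have "V_b b (max m1 m2) \<in> Bt" unfolding Bt_def using mm by auto
    thus ?thesis using sub[of m1] sub[of m2] mm by auto
  qed
  have net: "Bt \<noteq> {}" unfolding Bt_def by auto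
  have lamE: "lambda_top b = group_top_basis Bl" unfolding lambda_top_def Bl_def ..
  have tauE: "tau_top b = group_top_basis Bt" unfolding tau_top_def Bt_def ..
  have cl: "continuous_map (lambda_top b) T_top chi \<longleftrightarrow>
    (\<forall>U. openin T_top U \<longrightarrow> (\<forall>k. chi k \<in> U \<longrightarrow> (\<exists>V\<in>Bl. \<forall>v\<in>V. chi (k + v) \<in> U)))"
    unfolding lamE by (rule cont_iff[OF dirl nel Tc])
  have ct: "continuous_map (tau_top b) T_top chi \<longleftrightarrow>
    (\<forall>U. openin T_top U \<longrightarrow> (\<forall>k. chi k \<in> U \<longrightarrow> (\<exists>V\<in>Bt. \<forall>v\<in>V. chi (k + v) \<in> U)))"
    unfolding tauE by (rule cont_iff[OF dirt net Tc])
  have c0: "chi 0 \<in> U0" unfolding chiE U0_mem by (intro exI[of _ 0]) simp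
  define P where "P = (\<exists>a::int. \<exists>n::nat. n \<ge> 1 \<and> chi 1 = coset (real_of_int a / real (b n)))"
  have A: "P" if cc: "continuous_map (lambda_top b) T_top chi"
  proof -
    obtain V where V: "V \<in> Bl" "\<forall>v\<in>V. chi (0 + v) \<in> U0"
      using cc U0_open c0 unfolding cl by meson
    then obtain n where n: "V = {int (b n) * k | k. True}" unfolding Bl_def by auto
    have "\<exists>p::int. \<bar>real_of_int t * real (b n) * x - of_int p\<bar> < 1/4" for t
    proof -
      have "chi (int (b n) * t) \<in> U0" using V n by auto
      hence "\<exists>p::int. \<bar>real_of_int (int (b n) * t) * x - of_int p\<bar> < 1/4" unfolding chiE U0_mem .
      thus ?thesis by (simp add: mult.commute)
    qed
    then obtain a where "x = of_int a / real (b n)" using lamA[OF D] by blast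
    thus ?thesis using normP[OF D] x unfolding P_def by metis
  qed
  have Dt: "P" if cc: "continuous_map (tau_top b) T_top chi"
  proof -
    obtain V where V: "V \<in> Bt" "\<forall>v\<in>V. chi (0 + v) \<in> U0"
      using cc U0_open c0 unfolding ct by meson
    then obtain m where m: "V = V_b b m" "m \<ge> 1" unfolding Bt_def by auto
    have "\<exists>p::int. \<bar>real_of_int k * x - of_int p\<bar> < 1/4" if kk: "k \<in> V_b b m" for k
      using V m kk unfolding chiE U0_mem by auto
    then obtain a n where "x = of_int a / real (b n)" using hardD[OF D lim m(2)] by blast
    thus ?thesis using normP[OF D] x unfolding P_def by metis
  qed
  have fromP: "\<exists>a::int. \<exists>n::nat. n \<ge> 1 \<and> (\<forall>k. chi k = coset (of_int k * (of_int a / real (b n))))" if P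
  proof -
    obtain a n where an: "n \<ge> 1" "chi 1 = coset (real_of_int a / real (b n))" using \<open>P\<close> unfolding P_def by blast
    show ?thesis using hom_coset[OF h an(2)] an(1) by blast
  qed
  have B: "continuous_map (lambda_top b) T_top chi" if P
  proof -
    obtain a n where an: "n \<ge> 1" "\<And>k. chi k = coset (of_int k * (of_int a / real (b n)))"
      using fromP[OF \<open>P\<close>] by blast
    have bpos: "real (b n) > 0" using D_pos[OF D] by simp
    show ?thesis unfolding cl
    proof (intro allI impI)
      fix U k assume "openin T_top U" "chi k \<in> U"
      have "chi (k + v) = chi k" if vv: "v \<in> {int (b n) * k | k. True}" for v
      proof -
        obtain t where t: "v = int (b n) * t" using vv by blast
        have "of_int (k + v) * (of_int a / real (b n)) = of_int k * (of_int a / real (b n)) + of_int (a * t)"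
          unfolding t using bpos by (simp add: field_simps)
        thus ?thesis unfolding an(2) by (simp only: coset_add_int)
      qed
      moreover have "{int (b n) * k | k. True} \<in> Bl" unfolding Bl_def by blast
      ultimately show "\<exists>V\<in>Bl. \<forall>v\<in>V. chi (k + v) \<in> U" using \<open>chi k \<in> U\<close> by metis
    qed
  qed
  have C: "continuous_map (tau_top b) T_top chi" if P
  proof -
    obtain a n where an: "n \<ge> 1" "\<And>k. chi k = coset (of_int k * (of_int a / real (b n)))"
      using fromP[OF \<open>P\<close>] by blast
    have bpos: "real (b n) > 0" using D_pos[OF D] by simp
    show ?thesis unfolding ct
    proof (intro allI impI)
      fix U k assume U: "openin T_top U" "chi k \<in> U"
      define z where "z = of_int k * (of_int a / real (b n))"
      have "open {y. coset y \<in> U}" using U(1) unfolding openin_T by blast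
      moreover have "z \<in> {y. coset y \<in> U}" using U(2) an(2) unfolding z_def by simp
      ultimately obtain e where e: "e > 0" "ball z e \<subseteq> {y. coset y \<in> U}"
        using open_contains_ball by blast
      obtain m0 :: nat where m0: "(\<bar>of_int a\<bar> + 1) / (4 * e) < real m0" using reals_Archimedean2 by blast
      define m where "m = Suc m0"
      have m1: "m \<ge> 1" unfolding m_def by simp
      have me: "\<bar>of_int a\<bar> / (4 * real m) < e"
      proof -
        have "(\<bar>of_int a\<bar> + 1) / (4 * e) < real m" using m0 unfolding m_def by simp
        hence "\<bar>of_int a\<bar> + 1 < real m * (4 * e)" using e(1) by (simp add: field_simps)
        hence "\<bar>of_int a\<bar> < e * (4 * real m)" by (simp add: algebra_simps)
        thus ?thesis using m1 by (simp add: field_simps)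
      qed
      have "chi (k + v) \<in> U" if v: "v \<in> V_b b m" for v
      proof -
        have "coset (real_of_int v / real (b n)) \<in> T_m m" using v an(1) unfolding V_b_def by blast
        then obtain y where y: "coset (real_of_int v / real (b n)) = coset y" "\<bar>y\<bar> \<le> 1 / (4 * real m)"
          unfolding T_m_def by auto
        obtain j where j: "real_of_int v / real (b n) = y + of_int j" using y(1) coset_eq_iff by blast
        have "of_int (k + v) * (of_int a / real (b n)) = z + of_int a * (real_of_int v / real (b n))"
          unfolding z_def by (simp add: algebra_simps add_divide_distrib)
        also have "\<dots> = (z + of_int a * y) + of_int (a * j)" unfolding j by (simp add: algebra_simps)
        finally have "of_int (k + v) * (of_int a / real (b n)) = (z + of_int a * y) + of_int (a * j)" .
        hence ck: "chi (k + v) = coset (z + of_int a * y)" unfolding an(2) by (simp only: coset_add_int)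
        have "\<bar>of_int a * y\<bar> \<le> \<bar>of_int a\<bar> * (1 / (4 * real m))"
          unfolding abs_mult using y(2) by (intro mult_left_mono) auto
        hence "\<bar>of_int a * y\<bar> < e" using me by simp
        hence "z + of_int a * y \<in> ball z e" by (simp add: dist_real_def)
        thus ?thesis using e(2) ck by auto
      qed
      moreover have "V_b b m \<in> Bt" unfolding Bt_def using m1 by blast
      ultimately show "\<exists>V\<in>Bt. \<forall>v\<in>V. chi (k + v) \<in> U" by blast
    qed
  qed
  show ?thesis using A B C Dt unfolding P_def by blast
qed

end
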